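(* Let $\lambda_0,\lambda_1,c_1\ge0$. For $E\in\mathbb{R}$ let $$A_1(E)=\begin{bmatrix}E&-1\\1&0\end{bmatrix}\begin{bmatrix}E-c_1&-1\\1&0\end{bmatrix},\quad A_2(E)=\begin{bmatrix}E&-1\\1&0\end{bmatrix}\begin{bmatrix}E-\lambda_1-c_1&-1\\1&0\end{bmatrix},$$ $$A_3(E)=\begin{bmatrix}E-\lambda_0&-1\\1&0\end{bmatrix}\begin{bmatrix}E-c_1&-1\\1&0\end{bmatrix},\quad A_4(E)=\begin{bmatrix}E-\lambda_0&-1\\1&0\end{bmatrix}\begin{bmatrix}E-\lambda_1-c_1&-1\\1&0\end{bmatrix}.$$ Then the set $\{E\in\mathbb{R}: A_i(E)\text{ is hyperbolic for every } i=1,2,3,4\}=\bigcap_{i=1}^4\{E:|\operatorname{tr}A_i(E)|>2\}$ is a union of at most $5$ intervals.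
   Context: A matrix in $SL(2,\mathbb{R})$ is hyperbolic if the absolute value of its trace is greater than $2$. *)

theory Defs
  imports "HOL-Analysis.Analysis"
begin

definition mat2 :: "real \<Rightarrow> real \<Rightarrow> real \<Rightarrow> real \<Rightarrow> real^2^2" where
  "mat2 a b c d = (\<chi> i j. if i = 1 then (if j = 1 then a else b)
                            else (if j = 1 then c else d))"

definition tmat :: "real \<Rightarrow> real^2^2" where
  "tmat x = mat2 x (-1) 1 0"

definition hyperbolic :: "real^2^2 \<Rightarrow> bool" where
  "hyperbolic M \<longleftrightarrow> \<bar>trace M\<bar> > 2"

end

theory Submission
  imports Defs
begin

definition good :: "real \<Rightarrow> real \<Rightarrow> real \<Rightarrow> bool" where
  "good a b E \<longleftrightarrow> \<bar>(E - a) * (E - b) - 2\<bar> > 2"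

lemma hyp_tmat: "hyperbolic (tmat x ** tmat y) \<longleftrightarrow> \<bar>x * y - 2\<bar> > 2"
  unfolding hyperbolic_def trace_def tmat_def mat2_def matrix_matrix_mult_def
  by (simp add: sum_2)

lemma good_ne: "good a b E \<Longrightarrow> E \<noteq> a \<and> E \<noteq> b"
  unfolding good_def by auto

lemma good_mid:
  assumes ga: "good a b x" and gz: "good a b z" and xy: "x \<le> y" and yz: "y \<le> z"
    and sa: "a < x \<longleftrightarrow> a < z" and sb: "b < x \<longleftrightarrow> b < z"
  shows "good a b y"
proof -
  from good_ne[OF ga] good_ne[OF gz] have ne: "x \<noteq> a" "x \<noteq> b" "z \<noteq> a" "z \<noteq> b" by auto
  show ?thesis
  proof (cases "a < x")
    case True
    hence ay: "a < y" "a < z" using sa xy by auto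
    show ?thesis
    proof (cases "b < x")
      case True
      hence "b < y" using xy by auto
      have "(x - a) * (x - b) \<le> (y - a) * (y - b)"
        using True \<open>a < x\<close> xy by (intro mult_mono) auto
      moreover have "(x - a) * (x - b) > 0" using True \<open>a < x\<close> by simp
      moreover have "\<bar>(x - a) * (x - b) - 2\<bar> > 2" using ga unfolding good_def .
      ultimately show ?thesis unfolding good_def by linarith
    next
      case False
      hence "z < b" using sb ne by auto
      hence "y < b" using yz by auto
      hence "(y - a) * (y - b) < 0" using ay by (intro mult_pos_neg) auto
      thus ?thesis unfolding good_def by auto
    qed
  next
    case False
    hence "z < a" using sa ne by auto
    hence ya: "y < a" using yz by auto
    show ?thesis
    proof (cases "b < x")
      case True
      hence "b < y" using xy by auto
      hence "(y - a) * (y - b) < 0" using ya by (intro mult_neg_pos) auto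
      thus ?thesis unfolding good_def by auto
    next
      case False
      hence "z < b" using sb ne by auto
      have "(a - z) * (b - z) \<le> (a - y) * (b - y)"
        using \<open>z < b\<close> \<open>z < a\<close> yz by (intro mult_mono) auto
      moreover have "(a - z) * (b - z) > 0" using \<open>z < b\<close> \<open>z < a\<close> by simp
      moreover have "(a - z) * (b - z) = (z - a) * (z - b)"
        by (metis minus_diff_eq minus_mult_minus)
      moreover have "(a - y) * (b - y) = (y - a) * (y - b)"
        by (metis minus_diff_eq minus_mult_minus)
      moreover have "\<bar>(z - a) * (z - b) - 2\<bar> > 2" using gz unfolding good_def .
      ultimately show ?thesis unfolding good_def by linarith
    qed
  qed
qed

theorem proposition1:
  fixes lam0 lam1 c1 :: real
  assumes "lam0 \<ge> 0" and "lam1 \<ge> 0" and "c1 \<ge> 0"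
  defines "A1 \<equiv> (\<lambda>E. tmat E ** tmat (E - c1))"
      and "A2 \<equiv> (\<lambda>E. tmat E ** tmat (E - lam1 - c1))"
      and "A3 \<equiv> (\<lambda>E. tmat (E - lam0) ** tmat (E - c1))"
      and "A4 \<equiv> (\<lambda>E. tmat (E - lam0) ** tmat (E - lam1 - c1))"
  shows "\<exists>\<I> :: real set set. finite \<I> \<and> card \<I> \<le> 5 \<and> (\<forall>I\<in>\<I>. is_interval I) \<and>
           {E. hyperbolic (A1 E) \<and> hyperbolic (A2 E) \<and> hyperbolic (A3 E) \<and> hyperbolic (A4 E)}
             = \<Union>\<I>"
proof -
  define G where "G = {E. good 0 c1 E \<and> good 0 (lam1 + c1) E \<and> good lam0 c1 E \<and> good lam0 (lam1 + c1) E}"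
  have GE: "{E. hyperbolic (A1 E) \<and> hyperbolic (A2 E) \<and> hyperbolic (A3 E) \<and> hyperbolic (A4 E)} = G"
    unfolding G_def A1_def A2_def A3_def A4_def hyp_tmat good_def
    by (auto simp: algebra_simps)
  define T where "T = {0, lam0, c1, lam1 + c1}"
  define D where "D = (\<lambda>E. {t\<in>T. t < E})"
  define P where "P = (\<lambda>S. {E\<in>G. D E = S})"
  have finT: "finite T" unfolding T_def by simp
  have cardT: "card T \<le> 4" unfolding T_def by (simp add: card_insert_le_m1)
  have Dmono: "x \<le> y \<Longrightarrow> D x \<subseteq> D y" for x y unfolding D_def by auto
  have inj: "inj_on card (D ` G)"
  proof (rule inj_onI)
    fix A B assume A: "A \<in> D ` G" and B: "B \<in> D ` G" and c: "card A = card B"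
    then obtain x y where "A = D x" "B = D y" by auto
    moreover have "finite (D z)" for z unfolding D_def using finT by simp
    ultimately show "A = B" using c Dmono
      by (metis card_subset_eq nle_le)
  qed
  have "card (D ` G) = card (card ` D ` G)" using inj by (simp add: card_image)
  also have "\<dots> \<le> card {0..card T}"
  proof (rule card_mono)
    show "card ` D ` G \<subseteq> {0..card T}" unfolding D_def using finT
      by (auto intro!: card_mono)
  qed simp
  also have "\<dots> \<le> 5" using cardT by simp
  finally have cD: "card (D ` G) \<le> 5" .
  have finD: "finite (D ` G)"
  proof (rule finite_subset)
    show "D ` G \<subseteq> Pow T" unfolding D_def by auto
  qed (simp add: finT)
  have conv: "is_interval (P S)" for S
    unfolding is_interval_1
  proof (intro ballI allI impI)
    fix x z y assume x: "x \<in> P S" and z: "z \<in> P S" and yy: "x \<le> y \<and> y \<le> z"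
    have Dxz: "D x = D z" using x z unfolding P_def by auto
    have gx: "x \<in> G" and gz: "z \<in> G" using x z unfolding P_def by auto
    have sg: "t < x \<longleftrightarrow> t < z" if "t \<in> T" for t
      using Dxz that unfolding D_def by blast
    have Dy: "D y = D x" using Dmono[of x y] Dmono[of y z] yy Dxz by auto
    have T': "0 \<in> T" "lam0 \<in> T" "c1 \<in> T" "lam1 + c1 \<in> T" unfolding T_def by auto
    have "y \<in> G" using gx gz unfolding G_def
      using good_mid[of _ _ x z y] yy sg[OF T'(1)] sg[OF T'(2)] sg[OF T'(3)] sg[OF T'(4)]
      by auto
    thus "y \<in> P S" using Dy x unfolding P_def by auto
  qed
  show ?thesis
  proof (intro exI[of _ "P ` D ` G"] conjI)
    show "finite (P ` D ` G)" using finD by simp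
    show "card (P ` D ` G) \<le> 5" using cD card_image_le[OF finD, of P] by linarith
    show "\<forall>I\<in>P ` D ` G. is_interval I" using conv by auto
    show "{E. hyperbolic (A1 E) \<and> hyperbolic (A2 E) \<and> hyperbolic (A3 E) \<and> hyperbolic (A4 E)} = \<Union> (P ` D ` G)"
      unfolding GE P_def by auto
  qed
qed

end
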